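(* Let $G=\mathbb R^2\times SL(2,\mathbb C)$ be the simply connected Lie group with Lie algebra $2\mathbb R\oplus\mathfrak{sl}(2,\mathbb C)$. Let $\Delta\subset SL(2,\mathbb C)$ be a cocompact discrete subgroup, and let $\Gamma=\mathbb Z\times\mathbb Z\times\Delta\subset G$. Then the compact manifold $G/\Gamma$ admits an invariant strong HPKT structure.
   Context: An almost hyper-paracomplex structure on a manifold is a triple $(J_1,J_2,J_3)$ of endomorphisms of the tangent bundle with $J_1^2=J_2^2=\mathrm{id}$, $J_3^2=-\mathrm{id}$ and $J_1J_2=-J_2J_1=J_3$. It is hyper-paracomplex if each $J_a$ has vanishing Nijenhuis tensor. A metric $g$ is hyperparahermitian if $g(J_1X,J_1Y)=g(J_2X,J_2Y)=-g(J_3X,J_3Y)=-g(X,Y)$. An HPKT structure is a hyper-paracomplex structure together with a hyperparahermitian metric admitting a linear connection $\nabla$ with $\nabla g=\nabla J_a=0$ ($a=1,2,3$) and totally skew-symmetric torsion, i.e. $T^\nabla(X,Y,Z):=g(T^\nabla(X,Y),Z)$ is a 3-form. It is strong if $dT^\nabla=0$. "Invariant" on $G/\Gamma$ means induced by left-invariant structures on $G$, where $\Gamma$ acts by left translations. *)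

theory Defs
  imports "HOL-Analysis.Analysis"
begin

definition SL2C :: "(complex^2^2) set" where
  "SL2C = {M. det M = 1}"

definition is_subgroup_SL2C :: "(complex^2^2) set \<Rightarrow> bool" where
  "is_subgroup_SL2C D \<longleftrightarrow> D \<subseteq> SL2C \<and> mat 1 \<in> D \<and>
     (\<forall>a\<in>D. \<forall>b\<in>D. a ** b \<in> D) \<and> (\<forall>a\<in>D. matrix_inv a \<in> D)"

definition discrete_set :: "(complex^2^2) set \<Rightarrow> bool" where
  "discrete_set D \<longleftrightarrow> (\<forall>a\<in>D. \<exists>e>0. \<forall>b\<in>D. dist b a < e \<longrightarrow> b = a)"

text \<open>Cocompact: the quotient by the left action of D is compact, i.e. SL(2,C) = D K
  for some compact K.\<close>
definition cocompact_SL2C :: "(complex^2^2) set \<Rightarrow> bool" where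
  "cocompact_SL2C D \<longleftrightarrow> (\<exists>K. compact K \<and> K \<subseteq> SL2C \<and>
      SL2C = {d ** k | d k. d \<in> D \<and> k \<in> K})"

type_synonym lie = "real \<times> real \<times> (complex^2^2)"

definition gL :: "lie set" where
  "gL = {(a, b, M). trace M = 0}"

definition brk :: "lie \<Rightarrow> lie \<Rightarrow> lie" where
  "brk x y = (case x of (a, b, M) \<Rightarrow> case y of (a', b', M') \<Rightarrow> (0, 0, M ** M' - M' ** M))"

definition endo :: "(lie \<Rightarrow> lie) \<Rightarrow> bool" where
  "endo J \<longleftrightarrow> linear J \<and> J ` gL \<subseteq> gL"

definition nijenhuis :: "(lie \<Rightarrow> lie) \<Rightarrow> lie \<Rightarrow> lie \<Rightarrow> lie" where
  "nijenhuis J X Y = brk (J X) (J Y) - J (brk (J X) Y) - J (brk X (J Y)) + J (J (brk X Y))"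

definition almost_hpc :: "(lie \<Rightarrow> lie) \<Rightarrow> (lie \<Rightarrow> lie) \<Rightarrow> (lie \<Rightarrow> lie) \<Rightarrow> bool" where
  "almost_hpc J1 J2 J3 \<longleftrightarrow> endo J1 \<and> endo J2 \<and> endo J3 \<and>
     (\<forall>X\<in>gL. J1 (J1 X) = X \<and> J2 (J2 X) = X \<and> J3 (J3 X) = - X \<and>
              J1 (J2 X) = J3 X \<and> J2 (J1 X) = - J3 X)"

definition hpc :: "(lie \<Rightarrow> lie) \<Rightarrow> (lie \<Rightarrow> lie) \<Rightarrow> (lie \<Rightarrow> lie) \<Rightarrow> bool" where
  "hpc J1 J2 J3 \<longleftrightarrow> almost_hpc J1 J2 J3 \<and>
     (\<forall>J\<in>{J1, J2, J3}. \<forall>X\<in>gL. \<forall>Y\<in>gL. nijenhuis J X Y = 0)"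

definition metric :: "(lie \<Rightarrow> lie \<Rightarrow> real) \<Rightarrow> bool" where
  "metric g \<longleftrightarrow> bilinear g \<and> (\<forall>X\<in>gL. \<forall>Y\<in>gL. g X Y = g Y X) \<and>
     (\<forall>X\<in>gL. (\<forall>Y\<in>gL. g X Y = 0) \<longrightarrow> X = 0)"

definition hyperparahermitian ::
  "(lie \<Rightarrow> lie) \<Rightarrow> (lie \<Rightarrow> lie) \<Rightarrow> (lie \<Rightarrow> lie) \<Rightarrow> (lie \<Rightarrow> lie \<Rightarrow> real) \<Rightarrow> bool" where
  "hyperparahermitian J1 J2 J3 g \<longleftrightarrow> metric g \<and>
     (\<forall>X\<in>gL. \<forall>Y\<in>gL. g (J1 X) (J1 Y) = - g X Y \<and> g (J2 X) (J2 Y) = - g X Y \<and>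
                      - g (J3 X) (J3 Y) = - g X Y)"

text \<open>Left-invariant linear connection: nab X Y is the covariant derivative nabla_X Y of
  left-invariant fields; it is an arbitrary bilinear map gL x gL -> gL.\<close>
definition inv_connection :: "(lie \<Rightarrow> lie \<Rightarrow> lie) \<Rightarrow> bool" where
  "inv_connection nab \<longleftrightarrow> bilinear nab \<and> (\<forall>X\<in>gL. \<forall>Y\<in>gL. nab X Y \<in> gL)"

definition torsion :: "(lie \<Rightarrow> lie \<Rightarrow> lie) \<Rightarrow> lie \<Rightarrow> lie \<Rightarrow> lie" where
  "torsion nab X Y = nab X Y - nab Y X - brk X Y"

definition torsion3 :: "(lie \<Rightarrow> lie \<Rightarrow> real) \<Rightarrow> (lie \<Rightarrow> lie \<Rightarrow> lie) \<Rightarrow> lie \<Rightarrow> lie \<Rightarrow> lie \<Rightarrow> real" where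
  "torsion3 g nab X Y Z = g (torsion nab X Y) Z"

text \<open>Exterior derivative of a left-invariant 3-form (Chevalley--Eilenberg formula).\<close>
definition d3 :: "(lie \<Rightarrow> lie \<Rightarrow> lie \<Rightarrow> real) \<Rightarrow> lie \<Rightarrow> lie \<Rightarrow> lie \<Rightarrow> lie \<Rightarrow> real" where
  "d3 w X0 X1 X2 X3 =
     - w (brk X0 X1) X2 X3 + w (brk X0 X2) X1 X3 - w (brk X0 X3) X1 X2
     - w (brk X1 X2) X0 X3 + w (brk X1 X3) X0 X2 - w (brk X2 X3) X0 X1"

definition HPKT_connection ::
  "(lie \<Rightarrow> lie) \<Rightarrow> (lie \<Rightarrow> lie) \<Rightarrow> (lie \<Rightarrow> lie) \<Rightarrow> (lie \<Rightarrow> lie \<Rightarrow> real) \<Rightarrow> (lie \<Rightarrow> lie \<Rightarrow> lie) \<Rightarrow> bool" where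
  "HPKT_connection J1 J2 J3 g nab \<longleftrightarrow> inv_connection nab \<and>
     (\<forall>Z\<in>gL. \<forall>X\<in>gL. \<forall>Y\<in>gL. g (nab Z X) Y + g X (nab Z Y) = 0) \<and>
     (\<forall>J\<in>{J1, J2, J3}. \<forall>Z\<in>gL. \<forall>X\<in>gL. nab Z (J X) = J (nab Z X)) \<and>
     (\<forall>X\<in>gL. \<forall>Y\<in>gL. \<forall>Z\<in>gL.
        torsion3 g nab X Y Z = - torsion3 g nab Y X Z \<and>
        torsion3 g nab X Y Z = - torsion3 g nab X Z Y)"

text \<open>Left-invariant strong HPKT structure on G = R^2 x SL(2,C); it descends to an invariant
  strong HPKT structure on the quotient by Gamma (Gamma acting by left translations).\<close>
definition inv_strong_HPKT ::
  "(lie \<Rightarrow> lie) \<Rightarrow> (lie \<Rightarrow> lie) \<Rightarrow> (lie \<Rightarrow> lie) \<Rightarrow> (lie \<Rightarrow> lie \<Rightarrow> real) \<Rightarrow> bool" where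
  "inv_strong_HPKT J1 J2 J3 g \<longleftrightarrow> hpc J1 J2 J3 \<and> hyperparahermitian J1 J2 J3 g \<and>
     (\<exists>nab. HPKT_connection J1 J2 J3 g nab \<and>
        (\<forall>X0\<in>gL. \<forall>X1\<in>gL. \<forall>X2\<in>gL. \<forall>X3\<in>gL. d3 (torsion3 g nab) X0 X1 X2 X3 = 0))"

end

theory Submission imports Defs begin

definition phi :: "lie \<Rightarrow> complex^2^2" where
  "phi X = (case X of (a,b,M) \<Rightarrow> mat (Complex a b) + M)"
definition psi :: "complex^2^2 \<Rightarrow> lie" where
  "psi N = (Re (trace N / 2), Im (trace N / 2), N - mat (trace N / 2))"
definition cm :: "complex^2^2 \<Rightarrow> complex^2^2 \<Rightarrow> complex^2^2" where
  "cm a b = a ** b - b ** a"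
definition RJ :: "complex^2^2 \<Rightarrow> lie \<Rightarrow> lie" where
  "RJ A X = psi (phi X ** A)"
definition A1 :: "complex^2^2" where
  "A1 = (\<chi> i j. if i = j then (if i = 1 then 1 else -1) else 0)"
definition A2 :: "complex^2^2" where
  "A2 = (\<chi> i j. if i = j then 0 else 1)"
definition Bf :: "complex^2^2 \<Rightarrow> complex^2^2 \<Rightarrow> complex" where
  "Bf x y = trace x * trace y - trace (x ** y)"
definition gg :: "lie \<Rightarrow> lie \<Rightarrow> real" where
  "gg X Y = Re (Bf (phi X) (phi Y))"

lemmas E = vec_eq_iff forall_2 matrix_matrix_mult_def sum_2 mat_def trace_def

lemma phi_psi: "phi (psi N) = N"
  by (simp add: phi_def psi_def E complex_eq_iff)

lemma psi_phi: "X \<in> gL \<Longrightarrow> psi (phi X) = X"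
  by (auto simp: phi_def psi_def E gL_def complex_eq_iff)

lemma lin_phi: "linear phi"
  by (rule linearI) (auto simp: phi_def E complex_eq_iff algebra_simps split: prod.splits)

lemma lin_psi: "linear psi"
  by (rule linearI) (auto simp: psi_def E complex_eq_iff field_simps)

lemma lin_rm: "linear (\<lambda>N::complex^2^2. N ** A)"
  by (rule linearI) (auto simp: E algebra_simps)

lemma psi_gL: "psi N \<in> gL"
  by (simp add: psi_def gL_def E)

lemma brk_eq: "brk X Y = psi (cm (phi X) (phi Y))"
  by (auto simp: brk_def phi_def psi_def cm_def E complex_eq_iff algebra_simps split: prod.splits)

lemma lin_RJ: "linear (RJ A)"
proof -
  have "RJ A = psi \<circ> (\<lambda>N. N ** A) \<circ> phi" by (auto simp: RJ_def fun_eq_iff)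
  thus ?thesis using lin_phi lin_psi lin_rm by (metis linear_compose)
qed

lemma endo_RJ: "endo (RJ A)"
  using lin_RJ psi_gL by (auto simp: endo_def RJ_def)

lemma RJ_RJ: "RJ A (RJ B X) = RJ (B ** A) X"
  by (simp add: RJ_def phi_psi matrix_mul_assoc)

lemma A11: "A1 ** A1 = mat 1" by (simp add: A1_def E)
lemma A22: "A2 ** A2 = mat 1" by (simp add: A2_def E)
lemma A12: "A1 ** A2 = - (A2 ** A1)" by (simp add: A1_def A2_def E)
lemma A33: "(A2 ** A1) ** (A2 ** A1) = - mat 1" by (simp add: A1_def A2_def E)

lemma RJ_1: "X \<in> gL \<Longrightarrow> RJ (mat 1) X = X"
  by (simp add: RJ_def psi_phi)
lemma RJ_m1: "X \<in> gL \<Longrightarrow> RJ (- mat 1) X = - X"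
proof -
  assume X: "X \<in> gL"
  have "phi X ** (- mat 1) = - phi X" by (simp add: E)
  hence "RJ (- mat 1) X = psi (- phi X)" by (simp add: RJ_def)
  also have "\<dots> = - psi (phi X)" using lin_psi by (simp add: linear_neg)
  finally show ?thesis using X by (simp add: psi_phi)
qed
lemma RJ_neg: "RJ (- A) X = - RJ A X"
proof -
  have "phi X ** (- A) = - (phi X ** A)" by (simp add: E)
  thus ?thesis using lin_psi by (simp add: RJ_def linear_neg)
qed

lemma nij_id: fixes x y A :: "complex^2^2" shows
  "cm (x ** A) (y ** A) - cm (x ** A) y ** A - cm x (y ** A) ** A + cm x y ** A ** A = 0"
  by (simp add: E cm_def algebra_simps)

lemma nij_RJ: "nijenhuis (RJ A) X Y = 0"
proof -
  have "nijenhuis (RJ A) X Y = psi (cm (phi X ** A) (phi Y ** A) - cm (phi X ** A) (phi Y) ** A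
     - cm (phi X) (phi Y ** A) ** A + cm (phi X) (phi Y) ** A ** A)"
    using lin_psi by (simp add: nijenhuis_def RJ_def brk_eq phi_psi linear_diff linear_add)
  also have "\<dots> = 0" using lin_psi by (simp add: nij_id linear_0)
  finally show ?thesis .
qed

lemma hpc: "hpc (RJ A1) (RJ A2) (RJ (A2 ** A1))"
  unfolding hpc_def almost_hpc_def
  by (simp add: endo_RJ nij_RJ RJ_RJ A11 A22 A33 A12 RJ_1 RJ_m1 RJ_neg)

lemma Bf_add1: "Bf (x + y) z = Bf x z + Bf y z" by (simp add: Bf_def E algebra_simps)
lemma Bf_add2: "Bf z (x + y) = Bf z x + Bf z y" by (simp add: Bf_def E algebra_simps)
lemma Bf_sc1: "Bf (r *\<^sub>R x) z = of_real r * Bf x z" by (simp add: Bf_def E algebra_simps, simp add: scaleR_conv_of_real algebra_simps)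
lemma Bf_sc2: "Bf z (r *\<^sub>R x) = of_real r * Bf z x" by (simp add: Bf_def E algebra_simps, simp add: scaleR_conv_of_real algebra_simps)

lemma bil_gg: "bilinear gg"
  unfolding bilinear_def
  by (intro allI conjI linearI)
     (simp_all add: gg_def linear_add[OF lin_phi] linear_scale[OF lin_phi] Bf_add1 Bf_add2 Bf_sc1 Bf_sc2)

lemma Bf_sym: "Bf x y = Bf y x" by (simp add: Bf_def E algebra_simps)

lemma sym_gg: "gg X Y = gg Y X"
  by (simp add: gg_def Bf_sym[of "phi X"])

lemma Re_sq: "Re (z * cnj z) = (Re z)^2 + (Im z)^2"
  by (simp add: power2_eq_square)

lemma sq8: fixes a b c d e f g h :: real
  assumes "a^2+b^2+c^2+d^2+e^2+f^2+g^2+h^2 = 0"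
  shows "a=0 \<and> b=0 \<and> c=0 \<and> d=0 \<and> e=0 \<and> f=0 \<and> g=0 \<and> h=0"
proof -
  have "a^2=0 \<and> b^2=0 \<and> c^2=0 \<and> d^2=0 \<and> e^2=0 \<and> f^2=0 \<and> g^2=0 \<and> h^2=0"
    using assms zero_le_power2[of a] zero_le_power2[of b] zero_le_power2[of c] zero_le_power2[of d]
      zero_le_power2[of e] zero_le_power2[of f] zero_le_power2[of g] zero_le_power2[of h]
    by linarith
  thus ?thesis by simp
qed

lemma nondeg_mat: fixes x :: "complex^2^2"
  assumes "Re (Bf x (mat (trace (\<chi> i j. cnj (x $ j $ i))) - (\<chi> i j. cnj (x $ j $ i)))) = 0"
  shows "x = 0"
proof -
  have "Re (Bf x (mat (trace (\<chi> i j. cnj (x $ j $ i))) - (\<chi> i j. cnj (x $ j $ i))))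
     = ((Re (x$1$1))^2 + (Im (x$1$1))^2 + (Re (x$1$2))^2 + (Im (x$1$2))^2 +
        (Re (x$2$1))^2 + (Im (x$2$1))^2 + (Re (x$2$2))^2 + (Im (x$2$2))^2)"
    by (simp add: Bf_def E algebra_simps power2_eq_square)
  with assms have "(Re (x$1$1))^2 + (Im (x$1$1))^2 + (Re (x$1$2))^2 + (Im (x$1$2))^2 +
        (Re (x$2$1))^2 + (Im (x$2$1))^2 + (Re (x$2$2))^2 + (Im (x$2$2))^2 = 0" by simp
  hence "Re (x$1$1) = 0 \<and> Im (x$1$1) = 0 \<and> Re (x$1$2) = 0 \<and> Im (x$1$2) = 0 \<and>
        Re (x$2$1) = 0 \<and> Im (x$2$1) = 0 \<and> Re (x$2$2) = 0 \<and> Im (x$2$2) = 0"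
    by (rule sq8)
  thus ?thesis by (simp add: vec_eq_iff forall_2 complex_eq_iff)
qed

lemma metric_gg: "metric gg"
  unfolding metric_def
proof (intro conjI ballI impI)
  show "bilinear gg" by (rule bil_gg)
next
  fix X Y show "gg X Y = gg Y X" by (rule sym_gg)
next
  fix X assume X: "X \<in> gL" and H: "\<forall>Y\<in>gL. gg X Y = 0"
  let ?y = "mat (trace (\<chi> i j. cnj (phi X $ j $ i))) - (\<chi> i j. cnj (phi X $ j $ i))"
  have "gg X (psi ?y) = 0" using H psi_gL by blast
  hence "Re (Bf (phi X) ?y) = 0" by (simp only: gg_def phi_psi)
  hence "phi X = 0" by (rule nondeg_mat)
  hence "psi (phi X) = 0" using lin_psi by (simp add: linear_0)
  thus "X = 0" using X psi_phi by simp
qed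

lemma Bf_A1: "Bf (x ** A1) (y ** A1) = - Bf x y" by (simp add: Bf_def A1_def E algebra_simps)
lemma Bf_A2: "Bf (x ** A2) (y ** A2) = - Bf x y" by (simp add: Bf_def A2_def E algebra_simps)
lemma Bf_A3: "Bf (x ** (A2 ** A1)) (y ** (A2 ** A1)) = Bf x y" by (simp add: Bf_def A1_def A2_def E algebra_simps)

lemma hph: "hyperparahermitian (RJ A1) (RJ A2) (RJ (A2 ** A1)) gg"
  unfolding hyperparahermitian_def
  by (simp add: metric_gg gg_def RJ_def phi_psi Bf_A1 Bf_A2 Bf_A3)

lemma phi0: "phi 0 = 0" using lin_phi by (simp add: linear_0)
lemma psi0: "psi 0 = 0" using lin_psi by (simp add: linear_0)
lemma Bf0: "Bf 0 y = 0" "Bf y 0 = 0" by (simp_all add: Bf_def E)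

lemma tors: "torsion (\<lambda>_ _. 0) X Y = - brk X Y"
  by (simp add: torsion_def)

lemma phi_tors: "phi (torsion (\<lambda>_ _. 0) X Y) = - cm (phi X) (phi Y)"
  using lin_phi by (simp add: tors brk_eq linear_neg phi_psi)

lemma t3: "torsion3 gg (\<lambda>_ _. 0) X Y Z = Re (Bf (- cm (phi X) (phi Y)) (phi Z))"
  by (simp add: torsion3_def gg_def phi_tors)

lemma skew1: "Bf (- cm x y) z = - Bf (- cm y x) z" by (simp add: Bf_def cm_def E algebra_simps)
lemma skew2: "Bf (- cm x y) z = - Bf (- cm x z) y" by (simp add: Bf_def cm_def E algebra_simps)

lemma d3id: fixes x0 x1 x2 x3 :: "complex^2^2"
  shows "- Bf (- cm (cm x0 x1) x2) x3 + Bf (- cm (cm x0 x2) x1) x3 - Bf (- cm (cm x0 x3) x1) x2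
   - Bf (- cm (cm x1 x2) x0) x3 + Bf (- cm (cm x1 x3) x0) x2 - Bf (- cm (cm x2 x3) x0) x1 = 0"
  by (simp add: Bf_def E cm_def algebra_simps)

lemma phi_brk: "phi (brk X Y) = cm (phi X) (phi Y)" by (simp add: brk_eq phi_psi)

lemma d3_zero: "d3 (torsion3 gg (\<lambda>_ _. 0)) X0 X1 X2 X3 = 0"
proof -
  have "d3 (torsion3 gg (\<lambda>_ _. 0)) X0 X1 X2 X3 = Re (- Bf (- cm (cm (phi X0) (phi X1)) (phi X2)) (phi X3) + Bf (- cm (cm (phi X0) (phi X2)) (phi X1)) (phi X3) - Bf (- cm (cm (phi X0) (phi X3)) (phi X1)) (phi X2)
   - Bf (- cm (cm (phi X1) (phi X2)) (phi X0)) (phi X3) + Bf (- cm (cm (phi X1) (phi X3)) (phi X0)) (phi X2) - Bf (- cm (cm (phi X2) (phi X3)) (phi X0)) (phi X1))"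
    by (simp add: d3_def t3 phi_brk)
  also have "\<dots> = 0" by (simp only: d3id) simp
  finally show ?thesis .
qed

lemma conn: "HPKT_connection (RJ A1) (RJ A2) (RJ (A2 ** A1)) gg (\<lambda>_ _. 0)"
  unfolding HPKT_connection_def inv_connection_def
proof (intro conjI ballI)
  show "bilinear (\<lambda>(_::lie) (_::lie). 0::lie)"
    by (simp add: bilinear_def linear_zero)
next
  fix X Y :: lie show "(0::lie) \<in> gL" by (simp add: gL_def zero_prod_def trace_def)
next
  fix Z X Y :: lie show "gg 0 Y + gg X 0 = 0" by (simp add: gg_def phi0 Bf0)
next
  fix J Z X assume "J \<in> {RJ A1, RJ A2, RJ (A2 ** A1)}"
  then obtain A where "J = RJ A" by blast
  thus "(0::lie) = J 0" using lin_RJ by (simp add: linear_0)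
next
  fix X Y Z
  show "torsion3 gg (\<lambda>_ _. 0) X Y Z = - torsion3 gg (\<lambda>_ _. 0) Y X Z"
    by (simp add: t3 skew1[of "phi X"])
  show "torsion3 gg (\<lambda>_ _. 0) X Y Z = - torsion3 gg (\<lambda>_ _. 0) X Z Y"
    by (simp add: t3 skew2[of "phi X" "phi Y"])
qed

theorem mainTheorem4:
  fixes \<Delta> :: "(complex^2^2) set"
  assumes "is_subgroup_SL2C \<Delta>" and "discrete_set \<Delta>" and "cocompact_SL2C \<Delta>"
  shows "\<exists>J1 J2 J3 g. inv_strong_HPKT J1 J2 J3 g"
  unfolding inv_strong_HPKT_def
  using hpc hph conn d3_zero by blast

end
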